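(* In the SLAR setting, let $w^*=(w_1^*,\dots,w_d^* )$ be a minimizer of the optimal adversarial training objective $$\mathbb E_{(x,y)\sim\mathcal D}\big[\max(0,1-yw^\top x+\varepsilon\|w\|_1)\big]+\frac{\lambda}{2}\|w\|_2^2$$ (equivalently of $U(\delta_w,w)$ with $\delta_w(x,y)=-y\varepsilon\operatorname{sign}(w)$). Then for every non-robust feature $x_i$, $w_i^*=0$.
   Context: SLAR setting: $(x,y)$ is drawn from a distribution $\mathcal D$ on $\mathbb R^d\times\{-1,+1\}$, $x=(x_1,\dots,x_d)$ with finite second moments, such that (A1) for each $i$ there is a constant $\mu_i$ with $\mathbb E[x_i\mid y]=y\mu_i$ for $y\in\{-1,1\}$, and (A2) the coordinates $x_1,\dots,x_d$ are mutually independent conditionally on $y$. Fix $\lambda>0$ and a perturbation budget $\varepsilon>0$. For a perturbation function $\delta$ (map with $\|\delta(x,y)\|_\infty\le\varepsilon$) and $w\in\mathbb R^d$ let $U(\delta,w)=\mathbb E_{(x,y)\sim\mathcal D}[\max(0,1-yw^\top(x+\delta(x,y)))]+\frac{\lambda}{2}\|w\|_2^2$. A feature $x_i$ is non-robust if $|\mu_i|\le\varepsilon$, and robust otherwise. $\operatorname{sign}$ is coordinatewise with $\operatorname{sign}(0)=0$. *)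

theory Defs
  imports "HOL-Probability.Probability"
begin

definition l1norm :: "real ^ 'n \<Rightarrow> real" where
  "l1norm w = (\<Sum>i\<in>UNIV. \<bar>w $ i\<bar>)"

definition adv_objective ::
  "'a measure \<Rightarrow> ('a \<Rightarrow> real ^ 'n) \<Rightarrow> ('a \<Rightarrow> real) \<Rightarrow> real \<Rightarrow> real \<Rightarrow> real ^ 'n \<Rightarrow> real" where
  "adv_objective M X Y eps lam w =
     (\<integral>\<omega>. max 0 (1 - Y \<omega> * (w \<bullet> X \<omega>) + eps * l1norm w) \<partial>M) + lam / 2 * (norm w)\<^sup>2"

definition cond_on_label :: "'a measure \<Rightarrow> ('a \<Rightarrow> real) \<Rightarrow> real \<Rightarrow> 'a measure" where
  "cond_on_label M Y y0 = uniform_measure M {\<omega>\<in>space M. Y \<omega> = y0}"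

end

theory Submission
  imports Defs
begin

lemma vnth_borel[measurable]: "(\<lambda>x::real^'n. x $ i) \<in> borel_measurable borel"
  by (intro borel_measurable_continuous_onI continuous_at_imp_continuous_on ballI isCont_vec_nth continuous_ident)

lemma unif_transfer:
  fixes f :: "'a \<Rightarrow> real"
  assumes "prob_space M" "S \<in> sets M" "measure M S > 0" "integrable M f"
  shows "integrable (uniform_measure M S) f \<and>
    measure M S * integral\<^sup>L (uniform_measure M S) f = (\<integral>x. f x * indicator S x \<partial>M)"
proof -
  interpret prob_space M by fact
  define m where "m = measure M S"
  have m: "m > 0" using assms(3) m_def by simp
  have fm[measurable]: "f \<in> borel_measurable M" using assms(4) by simp
  have [measurable]: "S \<in> sets M" by fact
  have eq: "uniform_measure M S = density M (\<lambda>x. ennreal (indicator S x / m))"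
    unfolding uniform_measure_def emeasure_eq_measure m_def[symmetric]
    using m by (intro density_cong) (auto split: split_indicator simp: divide_ennreal[symmetric])
  have gm: "(\<lambda>x. indicator S x / m) \<in> borel_measurable M" by measurable
  have gnn: "AE x in M. 0 \<le> indicator S x / m" using m by (auto split: split_indicator)
  have int1: "integrable M (\<lambda>x. f x * indicator S x)"
    by (rule integrable_real_mult_indicator) (use assms in auto)
  have int2: "integrable M (\<lambda>x. indicator S x / m * f x)"
    using integrable_divide[OF int1, of m] by (simp add: mult_ac)
  have "integrable (uniform_measure M S) f"
    unfolding eq using integrable_real_density[OF gm gnn fm] int2 by simp
  moreover have "integral\<^sup>L (uniform_measure M S) f = (\<integral>x. indicator S x / m * f x \<partial>M)"
    unfolding eq using integral_real_density[OF gm gnn fm] by simp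
  moreover have "(\<integral>x. indicator S x / m * f x \<partial>M) = (\<integral>x. f x * indicator S x \<partial>M) / m"
    by (simp add: mult_ac)
  ultimately show ?thesis using m m_def by simp
qed

lemma cond_nonneg:
  fixes U V :: "'a \<Rightarrow> real"
  assumes "prob_space N" "prob_space.indep_var N borel U borel V"
    "integrable N U" "V \<in> borel_measurable N"
    "integral\<^sup>L N U = y * m" "y*y = 1" "m \<le> e"
  shows "0 \<le> (\<integral>\<omega>. (e - y * U \<omega>) * (if 0 < a - y * V \<omega> then 1 else 0) \<partial>N)"
proof -
  interpret prob_space N by fact
  have [measurable]: "U \<in> borel_measurable N" "V \<in> borel_measurable N" using assms by auto
  have ind: "indep_var borel (\<lambda>\<omega>. e - y * U \<omega>) borel (\<lambda>\<omega>. if 0 < a - y * V \<omega> then 1 else (0::real))"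
    using indep_var_compose[OF assms(2), of "\<lambda>u. e - y*u" borel "\<lambda>vv. if 0 < a - y * vv then 1 else (0::real)" borel]
    by (simp add: o_def)
  have i1: "integrable N (\<lambda>\<omega>. e - y * U \<omega>)" using assms(3) by auto
  have i2: "integrable N (\<lambda>\<omega>. if 0 < a - y * V \<omega> then 1 else (0::real))"
    apply (rule Bochner_Integration.integrable_bound[where M=N and f="\<lambda>_. 1::real" and g="\<lambda>\<omega>. if 0 < a - y * V \<omega> then 1 else (0::real)"])
    apply simp
    apply measurable
    done
  have "(\<integral>\<omega>. (e - y * U \<omega>) * (if 0 < a - y * V \<omega> then 1 else 0) \<partial>N)
     = (\<integral>\<omega>. e - y * U \<omega> \<partial>N) * (\<integral>\<omega>. (if 0 < a - y * V \<omega> then 1 else (0::real)) \<partial>N)"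
    by (rule indep_var_lebesgue_integral[OF ind i1 i2])
  also have "(\<integral>\<omega>. e - y * U \<omega> \<partial>N) = e - y * (y * m)"
    using assms(3,5) prob_space by simp
  also have "\<dots> = e - m" using assms(6) by (simp add: algebra_simps)
  finally show ?thesis using assms(7)
    by (simp add: integral_nonneg_AE)
qed

theorem mainTheorem16:
  fixes M :: "'a measure" and X :: "'a \<Rightarrow> real ^ 'n" and Y :: "'a \<Rightarrow> real"
    and \<mu> :: "'n \<Rightarrow> real" and lam eps :: real and wstar :: "real ^ 'n"
  assumes "prob_space M"
    and "X \<in> borel_measurable M" and "Y \<in> borel_measurable M"
    and "\<forall>\<omega>\<in>space M. Y \<omega> = -1 \<or> Y \<omega> = 1"
    and "\<forall>i. integrable M (\<lambda>\<omega>. (X \<omega> $ i)\<^sup>2)"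
    and A1: "\<forall>y0\<in>{-1, 1}. measure M {\<omega>\<in>space M. Y \<omega> = y0} > 0 \<longrightarrow>
              (\<forall>i. prob_space.expectation (cond_on_label M Y y0) (\<lambda>\<omega>. X \<omega> $ i) = y0 * \<mu> i)"
    and A2: "\<forall>y0\<in>{-1, 1}. measure M {\<omega>\<in>space M. Y \<omega> = y0} > 0 \<longrightarrow>
              prob_space.indep_vars (cond_on_label M Y y0) (\<lambda>_. borel) (\<lambda>i \<omega>. X \<omega> $ i) UNIV"
    and "lam > 0" and "eps > 0"
    and minimizer: "\<forall>w. adv_objective M X Y eps lam wstar \<le> adv_objective M X Y eps lam w"
  shows "\<forall>i. \<bar>\<mu> i\<bar> \<le> eps \<longrightarrow> wstar $ i = 0"
proof (intro allI impI)
  fix i assume mu: "\<bar>\<mu> i\<bar> \<le> eps"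
  interpret P: prob_space M by fact
  have [measurable]: "X \<in> borel_measurable M" "Y \<in> borel_measurable M" using assms by auto
  have Ypm: "\<And>\<omega>. \<omega> \<in> space M \<Longrightarrow> Y \<omega> = -1 \<or> Y \<omega> = 1" using assms(4) by auto
  have Xint: "integrable M (\<lambda>\<omega>. X \<omega> $ j)" for j
    by (rule P.square_integrable_imp_integrable, measurable, use assms(5) in auto)
  have XYint: "\<And>j. integrable M (\<lambda>\<omega>. Y \<omega> * X \<omega> $ j)"
  proof -
    fix j show "integrable M (\<lambda>\<omega>. Y \<omega> * X \<omega> $ j)"
      apply (rule Bochner_Integration.integrable_bound[OF Xint[of j]])
      apply measurable
      apply (rule AE_I2)
      subgoal for x using Ypm[of x] by (auto simp: abs_mult)
      done
  qed
  have inner_sum: "\<And>v x. v \<bullet> x = (\<Sum>j\<in>UNIV. v $ j * x $ j)" for v x :: "real^'n"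
    by (simp add: inner_vec_def)
  have YIint: "\<And>v. integrable M (\<lambda>\<omega>. Y \<omega> * (v \<bullet> X \<omega>))"
  proof -
    fix v :: "real^'n"
    have "integrable M (\<lambda>\<omega>. \<Sum>j\<in>UNIV. v $ j * (Y \<omega> * X \<omega> $ j))"
      by (intro Bochner_Integration.integrable_sum Bochner_Integration.integrable_mult_right XYint)
    then show "integrable M (\<lambda>\<omega>. Y \<omega> * (v \<bullet> X \<omega>))"
      by (simp add: inner_sum sum_distrib_left mult_ac)
  qed
  show "wstar $ i = 0"
  proof (rule ccontr)
    assume wi: "wstar $ i \<noteq> 0"
    define w' where "w' = (\<chi> j. if j = i then 0 else wstar $ j)"
    define I where "I = UNIV - {i}"
    have UI: "UNIV = insert i I" "i \<notin> I" "finite I" using I_def by auto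
    have w'i: "w' $ i = 0" and w'j: "\<And>j. j \<in> I \<Longrightarrow> w' $ j = wstar $ j"
      by (auto simp: w'_def I_def)
    have sumsplit: "(\<Sum>j\<in>UNIV. f j) = f i + (\<Sum>j\<in>I. f j)" for f :: "'n \<Rightarrow> real"
      by (simp add: I_def sum.remove)
    have l1: "l1norm wstar = l1norm w' + \<bar>wstar $ i\<bar>"
      unfolding l1norm_def sumsplit[of "\<lambda>j. \<bar>wstar $ j\<bar>"] sumsplit[of "\<lambda>j. \<bar>w' $ j\<bar>"]
      using w'i w'j by (simp cong: sum.cong)
    have inw': "w' \<bullet> v = (\<Sum>j\<in>I. wstar $ j * v $ j)" for v
      unfolding inner_sum sumsplit[of "\<lambda>j. w' $ j * v $ j"]
      using w'i w'j by (simp cong: sum.cong)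
    have inw: "wstar \<bullet> v = w' \<bullet> v + wstar $ i * v $ i" for v
      using inw'[of v] unfolding inner_sum[of wstar v] sumsplit[of "\<lambda>j. wstar $ j * v $ j"] by simp
    have nrm: "(norm wstar)\<^sup>2 = (norm w')\<^sup>2 + (wstar $ i)\<^sup>2"
      unfolding power2_norm_eq_inner inw inw'[of w'] inw'[of wstar]
      using w'j by (simp add: power2_eq_square cong: sum.cong)
    define G where "G \<omega> = 1 - Y \<omega> * (w' \<bullet> X \<omega>) + eps * l1norm w'" for \<omega>
    define B where "B \<omega> = eps * \<bar>wstar $ i\<bar> - Y \<omega> * (wstar $ i * X \<omega> $ i)" for \<omega>
    define ind where "ind \<omega> = (if 0 < G \<omega> then 1 else (0::real))" for \<omega>
    have FGB: "\<And>\<omega>. 1 - Y \<omega> * (wstar \<bullet> X \<omega>) + eps * l1norm wstar = G \<omega> + B \<omega>"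
      unfolding G_def B_def l1 inw by (simp add: algebra_simps)
    have [measurable]: "G \<in> borel_measurable M" "B \<in> borel_measurable M" "ind \<in> borel_measurable M"
      unfolding G_def B_def ind_def by measurable
    have Gint: "integrable M G" unfolding G_def using YIint[of w'] by auto
    have Bint: "integrable M B" unfolding B_def using XYint[of i]
      by (auto simp: mult.left_commute[of _ "wstar $ i"])
    have mGint: "integrable M (\<lambda>\<omega>. max 0 (G \<omega>))"
      by (rule Bochner_Integration.integrable_bound[OF Gint]) (auto intro!: AE_I2)
    have mFint: "integrable M (\<lambda>\<omega>. max 0 (G \<omega> + B \<omega>))"
      by (rule Bochner_Integration.integrable_bound[OF Bochner_Integration.integrable_add[OF Gint Bint]]) (auto intro!: AE_I2)
    have iBint: "integrable M (\<lambda>\<omega>. B \<omega> * ind \<omega>)"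
      by (rule Bochner_Integration.integrable_bound[OF Bint]) (auto intro!: AE_I2 simp: ind_def)
    have pw: "\<And>\<omega>. max 0 (G \<omega>) + B \<omega> * ind \<omega> \<le> max 0 (G \<omega> + B \<omega>)"
      by (simp add: ind_def)
    have key: "0 \<le> (\<integral>\<omega>. B \<omega> * ind \<omega> \<partial>M)"
    proof -
      define S where "S y0 = {\<omega>\<in>space M. Y \<omega> = y0}" for y0
      have Sm[measurable]: "S y0 \<in> sets M" for y0 unfolding S_def by measurable
      have each: "0 \<le> (\<integral>\<omega>. B \<omega> * ind \<omega> * indicator (S y0) \<omega> \<partial>M)" if y0: "y0 \<in> {-1, 1}" for y0
      proof (cases "measure M (S y0) > 0")
        case False
        then have "measure M (S y0) = 0" using measure_nonneg[of M "S y0"] by linarith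
        then have "S y0 \<in> null_sets M" using P.emeasure_eq_measure by (auto simp: null_sets_def)
        then have "AE \<omega> in M. \<omega> \<notin> S y0" by (rule AE_not_in)
        then have "AE \<omega> in M. B \<omega> * ind \<omega> * indicator (S y0) \<omega> = 0" by eventually_elim auto
        then show ?thesis by (simp add: integral_eq_zero_AE)
      next
        case True
        define N where "N = uniform_measure M (S y0)"
        have cN: "cond_on_label M Y y0 = N" unfolding N_def S_def cond_on_label_def ..
        have y0y0: "y0 * y0 = 1" using y0 by auto
        have tr: "integrable N f \<and> measure M (S y0) * integral\<^sup>L N f = (\<integral>x. f x * indicator (S y0) x \<partial>M)"
          if "integrable M f" for f :: "'a \<Rightarrow> real"
          unfolding N_def by (rule unif_transfer[OF assms(1) Sm True that])
        have pN: "prob_space N" unfolding N_def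
          using True P.emeasure_eq_measure by (intro prob_space_uniform_measure) auto
        interpret Q: prob_space N by (rule pN)
        have sN[simp, measurable_cong]: "sets N = sets M" unfolding N_def by simp
        have iv0: "Q.indep_vars (\<lambda>_. borel) (\<lambda>i \<omega>. X \<omega> $ i) UNIV"
          using A2 y0 True cN unfolding S_def by auto
        have iv1: "Q.indep_vars (\<lambda>_. borel) (\<lambda>j \<omega>. wstar $ j * X \<omega> $ j) (insert i I)"
          unfolding UI(1)[symmetric]
          by (rule Q.indep_vars_compose2[OF iv0]) measurable
        have iv: "Q.indep_var borel (\<lambda>\<omega>. wstar $ i * X \<omega> $ i) borel (\<lambda>\<omega>. \<Sum>j\<in>I. wstar $ j * X \<omega> $ j)"
          using Q.indep_vars_sum[OF UI(3) UI(2) iv1] by simp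
        have Uint: "integrable N (\<lambda>\<omega>. wstar $ i * X \<omega> $ i)"
          using tr[OF Bochner_Integration.integrable_mult_right[OF Xint[of i]]] by simp
        have EU: "integral\<^sup>L N (\<lambda>\<omega>. wstar $ i * X \<omega> $ i) = y0 * (wstar $ i * \<mu> i)"
          using A1 y0 True cN unfolding S_def by auto
        have Vm: "(\<lambda>\<omega>. \<Sum>j\<in>I. wstar $ j * X \<omega> $ j) \<in> borel_measurable N" by measurable
        have me: "wstar $ i * \<mu> i \<le> eps * \<bar>wstar $ i\<bar>"
        proof -
          have "wstar $ i * \<mu> i \<le> \<bar>wstar $ i\<bar> * \<bar>\<mu> i\<bar>" by (simp add: abs_mult[symmetric])
          also have "\<dots> \<le> \<bar>wstar $ i\<bar> * eps" using mu by (intro mult_left_mono) auto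
          finally show ?thesis by (simp add: mult.commute)
        qed
        have cn: "0 \<le> (\<integral>\<omega>. (eps * \<bar>wstar $ i\<bar> - y0 * (wstar $ i * X \<omega> $ i)) *
              (if 0 < (1 + eps * l1norm w') - y0 * (\<Sum>j\<in>I. wstar $ j * X \<omega> $ j) then 1 else 0) \<partial>N)"
          by (rule cond_nonneg[OF pN iv Uint Vm EU y0y0 me])
        have "(\<integral>\<omega>. B \<omega> * ind \<omega> \<partial>N) = (\<integral>\<omega>. (eps * \<bar>wstar $ i\<bar> - y0 * (wstar $ i * X \<omega> $ i)) *
              (if 0 < (1 + eps * l1norm w') - y0 * (\<Sum>j\<in>I. wstar $ j * X \<omega> $ j) then 1 else 0) \<partial>N)"
        proof (rule integral_cong_AE)
          show "(\<lambda>\<omega>. B \<omega> * ind \<omega>) \<in> borel_measurable N" by measurable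
          show "(\<lambda>\<omega>. (eps * \<bar>wstar $ i\<bar> - y0 * (wstar $ i * X \<omega> $ i)) *
              (if 0 < (1 + eps * l1norm w') - y0 * (\<Sum>j\<in>I. wstar $ j * X \<omega> $ j) then 1 else (0::real))) \<in> borel_measurable N"
            by measurable
          show "AE \<omega> in N. B \<omega> * ind \<omega> = (eps * \<bar>wstar $ i\<bar> - y0 * (wstar $ i * X \<omega> $ i)) *
              (if 0 < (1 + eps * l1norm w') - y0 * (\<Sum>j\<in>I. wstar $ j * X \<omega> $ j) then 1 else 0)"
            unfolding N_def
            by (rule AE_uniform_measureI[OF Sm], rule AE_I2)
               (auto simp: S_def B_def ind_def G_def inw' algebra_simps)
        qed
        then have "0 \<le> (\<integral>\<omega>. B \<omega> * ind \<omega> \<partial>N)" using cn by simp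
        then have "0 \<le> measure M (S y0) * (\<integral>\<omega>. B \<omega> * ind \<omega> \<partial>N)" using True by simp
        then show ?thesis using tr[OF iBint] by simp
      qed
      have "(\<integral>\<omega>. B \<omega> * ind \<omega> \<partial>M) = (\<integral>\<omega>. B \<omega> * ind \<omega> * indicator (S (-1)) \<omega> + B \<omega> * ind \<omega> * indicator (S 1) \<omega> \<partial>M)"
      proof (rule Bochner_Integration.integral_cong[OF refl])
        fix \<omega> assume "\<omega> \<in> space M"
        then show "B \<omega> * ind \<omega> = B \<omega> * ind \<omega> * indicator (S (-1)) \<omega> + B \<omega> * ind \<omega> * indicator (S 1) \<omega>"
          using Ypm[of \<omega>] by (auto simp: S_def split: split_indicator)
      qed
      also have "\<dots> = (\<integral>\<omega>. B \<omega> * ind \<omega> * indicator (S (-1)) \<omega> \<partial>M) + (\<integral>\<omega>. B \<omega> * ind \<omega> * indicator (S 1) \<omega> \<partial>M)"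
        by (intro Bochner_Integration.integral_add integrable_real_mult_indicator Sm iBint)
      finally show ?thesis using each[of "-1"] each[of 1] by simp
    qed
    have "(\<integral>\<omega>. max 0 (G \<omega>) \<partial>M) + (\<integral>\<omega>. B \<omega> * ind \<omega> \<partial>M) = (\<integral>\<omega>. max 0 (G \<omega>) + B \<omega> * ind \<omega> \<partial>M)"
      using mGint iBint by simp
    also have "\<dots> \<le> (\<integral>\<omega>. max 0 (G \<omega> + B \<omega>) \<partial>M)"
      using pw by (intro integral_mono Bochner_Integration.integrable_add mGint iBint mFint) auto
    finally have ineq: "(\<integral>\<omega>. max 0 (G \<omega>) \<partial>M) \<le> (\<integral>\<omega>. max 0 (G \<omega> + B \<omega>) \<partial>M)"
      using key by linarith
    have o1: "adv_objective M X Y eps lam wstar = (\<integral>\<omega>. max 0 (G \<omega> + B \<omega>) \<partial>M) + lam / 2 * ((norm w')\<^sup>2 + (wstar $ i)\<^sup>2)"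
      unfolding adv_objective_def FGB nrm ..
    have o2: "adv_objective M X Y eps lam w' = (\<integral>\<omega>. max 0 (G \<omega>) \<partial>M) + lam / 2 * (norm w')\<^sup>2"
      unfolding adv_objective_def G_def ..
    have "0 < lam / 2 * (wstar $ i)\<^sup>2" using wi assms(8) by simp
    then have "adv_objective M X Y eps lam w' < adv_objective M X Y eps lam wstar"
      unfolding o1 o2 using ineq by (simp add: algebra_simps)
    then show False using minimizer by (meson not_le)
  qed
qed

end
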